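(* There exist a strictly increasing sequence $(m_n)_{n\in\mathbb N}$ of natural numbers with $m_0=0$, finite groups $G_n$ ($n\in\mathbb N$), group homomorphisms $c_n\colon \mathbb F({}^n2)\to G_n$, and actions $\sigma_n$ of $G_n$ on $I_n:=[m_n,m_{n+1})=\{k\in\mathbb N: m_n\le k<m_{n+1}\}$, each faithful and transitive, such that for all $n\in\mathbb N$: (A) $\sum_{m<n}|I_m| < |I_n|-1$, and (B) the restriction of $c_n$ to $W_n$ is injective.
   Context: For $n\in\mathbb N$, ${}^n2$ is the finite set of binary sequences of length $n$ and $\mathbb F({}^n2)$ is the free group with free generating set ${}^n2$ (so $\mathbb F({}^0 2)$ is trivial). $W_n$ denotes the set of reduced words of $\mathbb F({}^n2)$ of word length at most $n$. *)

theory Defs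
  imports "HOL-Algebra.Algebra"
begin

text \<open>Words over an alphabet: a letter is a pair (b, x); b = True means the
generator x, b = False means its inverse.\<close>

type_synonym 'a fword = "(bool \<times> 'a) list"

definition cancels :: "bool \<times> 'a \<Rightarrow> bool \<times> 'a \<Rightarrow> bool" where
  "cancels a b \<longleftrightarrow> snd a = snd b \<and> fst a \<noteq> fst b"

definition reduced :: "'a fword \<Rightarrow> bool" where
  "reduced w \<longleftrightarrow> (\<forall>i. Suc i < length w \<longrightarrow> \<not> cancels (w ! i) (w ! Suc i))"

fun red_cons :: "bool \<times> 'a \<Rightarrow> 'a fword \<Rightarrow> 'a fword" where
  "red_cons a [] = [a]"
| "red_cons a (b # w) = (if cancels a b then w else a # b # w)"

definition reduce :: "'a fword \<Rightarrow> 'a fword" where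
  "reduce w = foldr red_cons w []"

definition free_group :: "'a set \<Rightarrow> 'a fword monoid" where
  "free_group S = \<lparr>carrier = {w. reduced w \<and> snd ` set w \<subseteq> S},
                   monoid.mult = (\<lambda>u v. reduce (u @ v)),
                   monoid.one = []\<rparr>"

definition bseq :: "nat \<Rightarrow> bool list set" where
  "bseq n = {xs. length xs = n}"

definition W :: "nat \<Rightarrow> bool list fword set" where
  "W n = {w \<in> carrier (free_group (bseq n)). length w \<le> n}"

definition Ival :: "(nat \<Rightarrow> nat) \<Rightarrow> nat \<Rightarrow> nat set" where
  "Ival m n = {m n..<m (Suc n)}"

end

theory Submission
  imports Defs
begin

definition wball :: "'a set \<Rightarrow> nat \<Rightarrow> 'a fword set" where
  "wball Gs N = {w. reduced w \<and> snd ` set w \<subseteq> Gs \<and> length w \<le> N}"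

definition flipw :: "'a fword \<Rightarrow> 'a fword" where
  "flipw w = map (\<lambda>(b,x). (\<not>b, x)) w"

definition piw :: "nat \<Rightarrow> bool \<times> 'a \<Rightarrow> 'a fword \<Rightarrow> 'a fword" where
  "piw N a w = (if w \<noteq> [] \<and> cancels a (hd w) then tl w
                else if length w < N then a # w else flipw w)"

lemma reduced_Cons: "reduced (a # w) \<longleftrightarrow> reduced w \<and> (w = [] \<or> \<not> cancels a (hd w))"
  unfolding reduced_def
  apply (cases w)
   apply simp
  apply (auto simp: nth_Cons split: nat.splits)
  done

lemma reduced_flipw: "reduced (flipw w) = reduced w"
  unfolding reduced_def flipw_def cancels_def
  by (auto simp: case_prod_beta)

lemma length_flipw[simp]: "length (flipw w) = length w"
  by (simp add: flipw_def)

lemma flipw_flipw[simp]: "flipw (flipw w) = w"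
  by (induct w) (auto simp: flipw_def)

lemma set_flipw: "snd ` set (flipw w) = snd ` set w"
  by (force simp: flipw_def case_prod_beta image_iff)

lemma hd_flipw: "w \<noteq> [] \<Longrightarrow> hd (flipw w) = (\<not> fst (hd w), snd (hd w))"
  by (cases w) (auto simp: flipw_def case_prod_beta)

lemma flipw_Nil_iff[simp]: "flipw w = [] \<longleftrightarrow> w = []"
  by (simp add: flipw_def)

lemma piw_in:
  assumes "snd a \<in> Gs" "w \<in> wball Gs N"
  shows "piw N a w \<in> wball Gs N"
proof -
  have w: "reduced w" "snd ` set w \<subseteq> Gs" "length w \<le> N" using assms by (auto simp: wball_def)
  show ?thesis
  proof (cases "w \<noteq> [] \<and> cancels a (hd w)")
    case True
    then obtain h t where "w = h # t" by (cases w) auto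
    then show ?thesis using True w by (auto simp: piw_def wball_def reduced_Cons)
  next
    case F: False
    show ?thesis
    proof (cases "length w < N")
      case True
      then show ?thesis using F w assms(1) by (auto simp: piw_def wball_def reduced_Cons)
    next
      case False
      then show ?thesis using F w by (auto simp: piw_def wball_def reduced_flipw set_flipw)
    qed
  qed
qed

lemma piw_inv:
  assumes "w \<in> wball Gs N"
  shows "piw N (\<not> fst a, snd a) (piw N a w) = w"
proof (cases "w \<noteq> [] \<and> cancels a (hd w)")
  case True
  then obtain h t where w: "w = h # t" and c: "cancels a h" by (cases w) auto
  have h: "h = (\<not> fst a, snd a)" using c by (cases h; cases a) (auto simp: cancels_def)
  have "reduced t" "t = [] \<or> \<not> cancels h (hd t)" using assms w by (auto simp: wball_def reduced_Cons)
  moreover have "length t < N" using assms w by (auto simp: wball_def)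
  ultimately show ?thesis using True w h by (auto simp: piw_def)
next
  case False
  note F = False
  show ?thesis
  proof (cases "length w < N")
    case True
    then show ?thesis using F by (auto simp: piw_def cancels_def)
  next
    case False
    have c1: "\<not> (flipw w \<noteq> [] \<and> cancels (\<not> fst a, snd a) (hd (flipw w)))"
      using F by (auto simp: hd_flipw cancels_def)
    have c2: "\<not> length (flipw w) < N" using False by simp
    have "piw N a w = flipw w" unfolding piw_def if_not_P[OF F] if_not_P[OF False] ..
    moreover have "piw N (\<not> fst a, snd a) (flipw w) = w"
      unfolding piw_def if_not_P[OF c1] if_not_P[OF c2] by simp
    ultimately show ?thesis by simp
  qed
qed

lemma piw_small: "length w < N \<Longrightarrow> piw N a w = red_cons a w"
  by (cases w) (auto simp: piw_def)


definition evalw :: "('b, 'c) monoid_scheme \<Rightarrow> (bool \<times> 'a \<Rightarrow> 'b) \<Rightarrow> 'a fword \<Rightarrow> 'b" where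
  "evalw H e w = foldr (\<lambda>a acc. e a \<otimes>\<^bsub>H\<^esub> acc) w \<one>\<^bsub>H\<^esub>"

lemma evalw_Nil[simp]: "evalw H e [] = \<one>\<^bsub>H\<^esub>" by (simp add: evalw_def)
lemma evalw_Cons[simp]: "evalw H e (a # w) = e a \<otimes>\<^bsub>H\<^esub> evalw H e w" by (simp add: evalw_def)

lemma reduce_Nil[simp]: "reduce [] = []" by (simp add: reduce_def)
lemma reduce_Cons[simp]: "reduce (a # w) = red_cons a (reduce w)" by (simp add: reduce_def)

lemma set_red_cons: "snd ` set (red_cons a w) \<subseteq> insert (snd a) (snd ` set w)"
  by (cases w) auto

lemma set_reduce: "snd ` set (reduce w) \<subseteq> snd ` set w"
proof (induct w)
  case (Cons a w)
  have "snd ` set (red_cons a (reduce w)) \<subseteq> insert (snd a) (snd ` set (reduce w))"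
    by (rule set_red_cons)
  then show ?case using Cons by auto
qed simp

lemma reduced_red_cons: "reduced w \<Longrightarrow> reduced (red_cons a w)"
  by (cases w) (auto simp: reduced_Cons)

lemma reduced_reduce: "reduced (reduce w)"
  by (induct w) (simp_all add: reduced_red_cons reduced_def[of "[]"])

context
  fixes H :: "('b, 'c) monoid_scheme" and e :: "bool \<times> 'a \<Rightarrow> 'b" and Gs :: "'a set"
  assumes grp: "group H"
    and ecar: "\<And>a. snd a \<in> Gs \<Longrightarrow> e a \<in> carrier H"
    and ecan: "\<And>a b. snd a \<in> Gs \<Longrightarrow> snd b \<in> Gs \<Longrightarrow> cancels a b \<Longrightarrow> e a \<otimes>\<^bsub>H\<^esub> e b = \<one>\<^bsub>H\<^esub>"
begin

lemma evalw_carrier: "snd ` set w \<subseteq> Gs \<Longrightarrow> evalw H e w \<in> carrier H"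
  by (induct w) (auto simp: ecar group.is_monoid[OF grp] monoid.m_closed monoid.one_closed)

lemma evalw_append: "snd ` set u \<subseteq> Gs \<Longrightarrow> snd ` set v \<subseteq> Gs \<Longrightarrow>
    evalw H e (u @ v) = evalw H e u \<otimes>\<^bsub>H\<^esub> evalw H e v"
  by (induct u) (auto simp: ecar evalw_carrier group.is_monoid[OF grp] monoid.m_assoc)

lemma evalw_red_cons: "snd a \<in> Gs \<Longrightarrow> snd ` set w \<subseteq> Gs \<Longrightarrow>
    evalw H e (red_cons a w) = e a \<otimes>\<^bsub>H\<^esub> evalw H e w"
proof (cases w)
  case (Cons b w')
  assume a: "snd a \<in> Gs" "snd ` set w \<subseteq> Gs"
  then have b: "snd b \<in> Gs" "snd ` set w' \<subseteq> Gs" using Cons by auto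
  show ?thesis
  proof (cases "cancels a b")
    case True
    have "e a \<otimes>\<^bsub>H\<^esub> (e b \<otimes>\<^bsub>H\<^esub> evalw H e w') = (e a \<otimes>\<^bsub>H\<^esub> e b) \<otimes>\<^bsub>H\<^esub> evalw H e w'"
      using a b by (simp add: ecar evalw_carrier group.is_monoid[OF grp] monoid.m_assoc)
    also have "\<dots> = evalw H e w'" using ecan[OF a(1) b(1) True] b
      by (simp add: evalw_carrier group.is_monoid[OF grp] monoid.l_one)
    finally show ?thesis using True Cons by simp
  qed (use Cons in simp)
qed simp

lemma evalw_reduce: "snd ` set w \<subseteq> Gs \<Longrightarrow> evalw H e (reduce w) = evalw H e w"
proof (induct w)
  case (Cons a w)
  then have "snd a \<in> Gs" "snd ` set w \<subseteq> Gs" by auto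
  moreover have "snd ` set (reduce w) \<subseteq> Gs" using set_reduce[of w] calculation by auto
  ultimately show ?case using Cons by (simp add: evalw_red_cons)
qed simp

lemma evalw_hom: "evalw H e \<in> hom (free_group Gs) H"
proof -
  have "evalw H e (reduce (u @ v)) = evalw H e u \<otimes>\<^bsub>H\<^esub> evalw H e v"
    if "snd ` set u \<subseteq> Gs" "snd ` set v \<subseteq> Gs" for u v
  proof -
    have "snd ` set (u @ v) \<subseteq> Gs" using that by auto
    then have "evalw H e (reduce (u @ v)) = evalw H e (u @ v)" by (rule evalw_reduce)
    also have "\<dots> = evalw H e u \<otimes>\<^bsub>H\<^esub> evalw H e v" using that by (rule evalw_append)
    finally show ?thesis .
  qed
  then show ?thesis
    unfolding hom_def free_group_def using evalw_carrier by (simp add: Pi_iff)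
qed

end


definition transp :: "('b, 'c) monoid_scheme \<Rightarrow> ('b \<Rightarrow> nat) \<Rightarrow> nat set \<Rightarrow> nat monoid" where
  "transp H f A = \<lparr>carrier = A,
     monoid.mult = \<lambda>x y. f (inv_into (carrier H) f x \<otimes>\<^bsub>H\<^esub> inv_into (carrier H) f y),
     monoid.one = f \<one>\<^bsub>H\<^esub>\<rparr>"

lemma transp:
  assumes grp: "group H" and bij: "bij_betw f (carrier H) A"
  shows "group (transp H f A)" "f \<in> hom H (transp H f A)"
proof -
  interpret group H by (rule grp)
  let ?g = "inv_into (carrier H) f"
  have g: "\<And>x. x \<in> A \<Longrightarrow> ?g x \<in> carrier H" "\<And>x. x \<in> A \<Longrightarrow> f (?g x) = x"
    "\<And>x. x \<in> carrier H \<Longrightarrow> ?g (f x) = x" "\<And>x. x \<in> carrier H \<Longrightarrow> f x \<in> A"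
    using bij by (auto simp: bij_betw_def inv_into_into f_inv_into_f)
  show "group (transp H f A)"
  proof (rule groupI)
    show "\<And>x y. x \<in> carrier (transp H f A) \<Longrightarrow> y \<in> carrier (transp H f A) \<Longrightarrow>
      x \<otimes>\<^bsub>transp H f A\<^esub> y \<in> carrier (transp H f A)"
      by (simp add: transp_def g)
    show "\<one>\<^bsub>transp H f A\<^esub> \<in> carrier (transp H f A)" by (simp add: transp_def g)
    show "\<And>x y z. x \<in> carrier (transp H f A) \<Longrightarrow> y \<in> carrier (transp H f A) \<Longrightarrow> z \<in> carrier (transp H f A) \<Longrightarrow>
      x \<otimes>\<^bsub>transp H f A\<^esub> y \<otimes>\<^bsub>transp H f A\<^esub> z = x \<otimes>\<^bsub>transp H f A\<^esub> (y \<otimes>\<^bsub>transp H f A\<^esub> z)"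
      by (simp add: transp_def g m_assoc)
    show "\<And>x. x \<in> carrier (transp H f A) \<Longrightarrow> \<one>\<^bsub>transp H f A\<^esub> \<otimes>\<^bsub>transp H f A\<^esub> x = x"
      by (simp add: transp_def g)
    show "\<exists>y\<in>carrier (transp H f A). y \<otimes>\<^bsub>transp H f A\<^esub> x = \<one>\<^bsub>transp H f A\<^esub>"
      if "x \<in> carrier (transp H f A)" for x
      using that by (intro bexI[of _ "f (inv\<^bsub>H\<^esub> (?g x))"]) (auto simp: transp_def g)
  qed
  show "f \<in> hom H (transp H f A)"
    by (auto simp: hom_def transp_def g)
qed


lemma regular_action:
  assumes grp: "group G"
  shows "faithful_action G (carrier G) (\<lambda>g. \<lambda>x\<in>carrier G. g \<otimes>\<^bsub>G\<^esub> x)"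
    "transitive_action G (carrier G) (\<lambda>g. \<lambda>x\<in>carrier G. g \<otimes>\<^bsub>G\<^esub> x)"
proof -
  interpret group G by (rule grp)
  let ?p = "\<lambda>g. \<lambda>x\<in>carrier G. g \<otimes>\<^bsub>G\<^esub> x"
  have inB: "?p g \<in> Bij (carrier G)" if "g \<in> carrier G" for g
  proof -
    have "bij_betw (?p g) (carrier G) (carrier G)"
      unfolding bij_betw_def inj_on_def
    proof (intro conjI ballI impI equalityI subsetI)
      fix y assume "y \<in> carrier G"
      then show "y \<in> ?p g ` carrier G" using that
        by (intro image_eqI[of _ _ "inv\<^bsub>G\<^esub> g \<otimes>\<^bsub>G\<^esub> y"]) (auto simp: m_assoc[symmetric])
    qed (use that in auto)
    then show ?thesis by (simp add: Bij_def)
  qed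
  have ga: "group_action G (carrier G) ?p"
    unfolding group_action_def group_hom_def group_hom_axioms_def
  proof (intro conjI)
    show "group G" by (rule grp)
    show "group (BijGroup (carrier G))" by (rule group_BijGroup)
    show "?p \<in> hom G (BijGroup (carrier G))"
      unfolding hom_def
    proof (intro CollectI conjI ballI funcsetI)
      fix g assume "g \<in> carrier G" then show "?p g \<in> carrier (BijGroup (carrier G))"
        using inB by (simp add: BijGroup_def)
    next
      fix g h assume gh: "g \<in> carrier G" "h \<in> carrier G"
      have "?p (g \<otimes>\<^bsub>G\<^esub> h) = compose (carrier G) (?p g) (?p h)"
      proof (rule ext)
        fix x show "?p (g \<otimes>\<^bsub>G\<^esub> h) x = compose (carrier G) (?p g) (?p h) x"
          using gh by (cases "x \<in> carrier G") (simp_all add: compose_def m_assoc)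
      qed
      then show "?p (g \<otimes>\<^bsub>G\<^esub> h) = ?p g \<otimes>\<^bsub>BijGroup (carrier G)\<^esub> ?p h"
        using inB gh by (simp add: BijGroup_def)
    qed
  qed
  show "faithful_action G (carrier G) ?p"
    unfolding faithful_action_def faithful_action_axioms_def
  proof (intro conjI ga inj_onI)
    fix x y assume "x \<in> carrier G" "y \<in> carrier G" "?p x = ?p y"
    then have "?p x \<one>\<^bsub>G\<^esub> = ?p y \<one>\<^bsub>G\<^esub>" by simp
    then show "x = y" using \<open>x \<in> carrier G\<close> \<open>y \<in> carrier G\<close> by simp
  qed
  show "transitive_action G (carrier G) ?p"
    unfolding transitive_action_def transitive_action_axioms_def
  proof (intro conjI ga allI impI ballI)
    fix x y assume "x \<in> carrier G" "y \<in> carrier G"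
    then show "\<exists>g\<in>carrier G. ?p g x = y"
      by (intro bexI[of _ "y \<otimes>\<^bsub>G\<^esub> inv\<^bsub>G\<^esub> x"]) (auto simp: m_assoc)
  qed
qed



definition ev :: "'a set \<Rightarrow> nat \<Rightarrow> bool \<times> 'a \<Rightarrow> 'a fword \<Rightarrow> 'a fword" where
  "ev Gs N a = restrict (piw N a) (wball Gs N)"

lemma ev_Bij: "snd a \<in> Gs \<Longrightarrow> ev Gs N a \<in> Bij (wball Gs N)"
proof -
  assume a: "snd a \<in> Gs"
  have "bij_betw (piw N a) (wball Gs N) (wball Gs N)"
  proof (rule bij_betw_byWitness[where f' = "piw N (\<not> fst a, snd a)"])
    show "\<forall>w\<in>wball Gs N. piw N (\<not> fst a, snd a) (piw N a w) = w" using piw_inv by blast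
    show "\<forall>w\<in>wball Gs N. piw N a (piw N (\<not> fst a, snd a) w) = w"
      using piw_inv[of _ Gs N "(\<not> fst a, snd a)"] by simp
    show "piw N a ` wball Gs N \<subseteq> wball Gs N" using piw_in a by blast
    show "piw N (\<not> fst a, snd a) ` wball Gs N \<subseteq> wball Gs N" using piw_in[of "(\<not> fst a, snd a)"] a by auto
  qed
  then show ?thesis unfolding ev_def Bij_def by simp
qed

lemma ev_cancel:
  assumes "snd a \<in> Gs" "snd b \<in> Gs" "cancels a b"
  shows "ev Gs N a \<otimes>\<^bsub>BijGroup (wball Gs N)\<^esub> ev Gs N b = \<one>\<^bsub>BijGroup (wball Gs N)\<^esub>"
proof -
  have a: "a = (\<not> fst b, snd b)" using assms(3) by (cases a; cases b) (auto simp: cancels_def)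
  have "compose (wball Gs N) (ev Gs N a) (ev Gs N b) = (\<lambda>x\<in>wball Gs N. x)"
  proof (rule ext)
    fix x show "compose (wball Gs N) (ev Gs N a) (ev Gs N b) x = (\<lambda>x\<in>wball Gs N. x) x"
    proof (cases "x \<in> wball Gs N")
      case True
      have p: "piw N b x \<in> wball Gs N" using piw_in[OF assms(2) True] .
      have "compose (wball Gs N) (ev Gs N a) (ev Gs N b) x = piw N a (piw N b x)"
        using True p by (simp add: compose_def ev_def)
      also have "\<dots> = x" unfolding a by (rule piw_inv[OF True])
      finally show ?thesis using True by simp
    qed (simp add: compose_def)
  qed
  then show ?thesis using ev_Bij[OF assms(1)] ev_Bij[OF assms(2)] by (simp add: BijGroup_def)
qed

lemma evalw_ev_hom: "evalw (BijGroup (wball Gs N)) (ev Gs N) \<in> hom (free_group Gs) (BijGroup (wball Gs N))"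
proof (rule evalw_hom)
  show "group (BijGroup (wball Gs N))" by (rule group_BijGroup)
  show "\<And>a. snd a \<in> Gs \<Longrightarrow> ev Gs N a \<in> carrier (BijGroup (wball Gs N))"
    using ev_Bij by (simp add: BijGroup_def)
  show "\<And>a b. snd a \<in> Gs \<Longrightarrow> snd b \<in> Gs \<Longrightarrow> cancels a b \<Longrightarrow>
    ev Gs N a \<otimes>\<^bsub>BijGroup (wball Gs N)\<^esub> ev Gs N b = \<one>\<^bsub>BijGroup (wball Gs N)\<^esub>"
    by (rule ev_cancel)
qed

lemma carrier_BijGroup: "carrier (BijGroup S) = Bij S"
  by (simp add: BijGroup_def)

lemma ev_carrier: "snd a \<in> Gs \<Longrightarrow> ev Gs N a \<in> carrier (BijGroup (wball Gs N))"
  unfolding carrier_BijGroup by (rule ev_Bij)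

lemma evalw_ev_carrier: "snd ` set u \<subseteq> Gs \<Longrightarrow>
    evalw (BijGroup (wball Gs N)) (ev Gs N) u \<in> Bij (wball Gs N)"
proof -
  assume u: "snd ` set u \<subseteq> Gs"
  have "evalw (BijGroup (wball Gs N)) (ev Gs N) u \<in> carrier (BijGroup (wball Gs N))"
    apply (rule evalw_carrier[where H="BijGroup (wball Gs N)" and e="ev Gs N" and Gs=Gs])
       apply (rule group_BijGroup)
      apply (erule ev_carrier)
     apply (erule (2) ev_cancel)
    apply (rule u)
    done
  then show ?thesis unfolding carrier_BijGroup .
qed

lemma mult_BijGroup: "f \<in> Bij S \<Longrightarrow> g \<in> Bij S \<Longrightarrow> f \<otimes>\<^bsub>BijGroup S\<^esub> g = compose S f g"
  by (simp add: BijGroup_def)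

lemma one_BijGroup: "\<one>\<^bsub>BijGroup S\<^esub> = (\<lambda>x\<in>S. x)"
  by (simp add: BijGroup_def)

lemma Nil_wball[simp]: "[] \<in> wball Gs N" by (simp add: wball_def reduced_def)

lemma evalw_ev_apply:
  "reduced u \<Longrightarrow> snd ` set u \<subseteq> Gs \<Longrightarrow> length u \<le> N \<Longrightarrow>
    evalw (BijGroup (wball Gs N)) (ev Gs N) u [] = u"
proof (induct u)
  case Nil
  then show ?case by (simp add: one_BijGroup)
next
  case (Cons a u)
  have ru: "reduced u" "u = [] \<or> \<not> cancels a (hd u)" using Cons.prems by (auto simp: reduced_Cons)
  have IH: "evalw (BijGroup (wball Gs N)) (ev Gs N) u [] = u"
    using Cons.prems ru(1) by (intro Cons.hyps) auto
  have inB: "evalw (BijGroup (wball Gs N)) (ev Gs N) u \<in> Bij (wball Gs N)"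
    using Cons.prems by (intro evalw_ev_carrier) auto
  have aB: "ev Gs N a \<in> Bij (wball Gs N)" using Cons.prems by (intro ev_Bij) auto
  have uS: "u \<in> wball Gs N" using Cons.prems ru by (auto simp: wball_def)
  have "evalw (BijGroup (wball Gs N)) (ev Gs N) (a # u) [] = ev Gs N a u"
  proof -
    have "evalw (BijGroup (wball Gs N)) (ev Gs N) (a # u)
        = compose (wball Gs N) (ev Gs N a) (evalw (BijGroup (wball Gs N)) (ev Gs N) u)"
      unfolding evalw_Cons by (rule mult_BijGroup[OF aB inB])
    then show ?thesis using IH by (simp add: compose_def)
  qed
  also have "\<dots> = piw N a u" using uS by (simp add: ev_def)
  also have "\<dots> = red_cons a u" using Cons.prems by (intro piw_small) auto
  also have "\<dots> = a # u" using ru by (cases u) auto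
  finally show ?case .
qed

lemma finite_wball: "finite Gs \<Longrightarrow> finite (wball Gs N)"
proof -
  assume f: "finite Gs"
  have "wball Gs N \<subseteq> {xs. set xs \<subseteq> UNIV \<times> Gs \<and> length xs \<le> N}"
    by (auto simp: wball_def)
  moreover have "finite {xs. set xs \<subseteq> (UNIV :: bool set) \<times> Gs \<and> length xs \<le> N}"
    using f by (intro finite_lists_length_le) auto
  ultimately show ?thesis by (rule finite_subset)
qed

lemma finite_Bij: "finite S \<Longrightarrow> finite (Bij S)"
proof -
  assume f: "finite S"
  have "Bij S \<subseteq> PiE S (\<lambda>_. S)"
    by (auto simp: Bij_def PiE_def bij_betw_def)
  moreover have "finite (PiE S (\<lambda>_. S))" using f by (intro finite_PiE) auto
  ultimately show ?thesis by (rule finite_subset)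
qed

definition swf :: "'a \<Rightarrow> 'a \<Rightarrow> 'a \<Rightarrow> 'a" where
  "swf a b x = (if x = a then b else if x = b then a else x)"

lemma card_Bij_ge: assumes "finite S" "s0 \<in> S" shows "card S \<le> card (Bij S)"
proof -
  have inB: "restrict (swf s0 s) S \<in> Bij S" if "s \<in> S" for s
  proof -
    have "bij_betw (swf s0 s) S S"
      by (rule bij_betw_byWitness[where f' = "swf s0 s"]) (use that assms in \<open>auto simp: swf_def\<close>)
    then show ?thesis by (simp add: Bij_def)
  qed
  have "inj_on (\<lambda>s. restrict (swf s0 s) S) S"
  proof (rule inj_onI)
    fix s t assume "s \<in> S" "t \<in> S" "restrict (swf s0 s) S = restrict (swf s0 t) S"
    then have "restrict (swf s0 s) S s0 = restrict (swf s0 t) S s0" by simp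
    then show "s = t" using assms by (simp add: swf_def)
  qed
  then show ?thesis using inB finite_Bij[OF assms(1)]
    by (intro card_inj_on_le) auto
qed

lemma card_wball_ge: assumes "finite Gs" "g \<in> Gs" shows "Suc N \<le> card (wball Gs N)"
proof -
  have "inj_on (\<lambda>k. replicate k (True, g)) {..N}" by (auto simp: inj_on_def)
  moreover have "(\<lambda>k. replicate k (True, g)) ` {..N} \<subseteq> wball Gs N"
    using assms by (auto simp: wball_def reduced_def cancels_def)
  ultimately show ?thesis using card_inj_on_le[OF _ _ finite_wball[OF assms(1)]] by fastforce
qed

definition HG :: "nat \<Rightarrow> nat \<Rightarrow> (bool list fword \<Rightarrow> bool list fword) monoid" where
  "HG n M = BijGroup (wball (bseq n) (n + M + 2))"

definition KK :: "nat \<Rightarrow> nat \<Rightarrow> nat" where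
  "KK n M = card (Bij (wball (bseq n) (n + M + 2)))"

primrec mm :: "nat \<Rightarrow> nat" where
  "mm 0 = 0"
| "mm (Suc n) = mm n + KK n (mm n)"

definition fb :: "nat \<Rightarrow> (bool list fword \<Rightarrow> bool list fword) \<Rightarrow> nat" where
  "fb n = (SOME f. bij_betw f (carrier (HG n (mm n))) (Ival mm n))"

lemma finite_bseq: "finite (bseq n)"
proof -
  have "finite {xs :: bool list. set xs \<subseteq> UNIV \<and> length xs = n}"
    by (intro finite_lists_length_eq) auto
  then show ?thesis by (simp add: bseq_def)
qed

lemma rep_bseq: "replicate n False \<in> bseq n" by (simp add: bseq_def)

lemma KK_ge: "M + 3 \<le> KK n M"
proof -
  have "Suc (n + M + 2) \<le> card (wball (bseq n) (n + M + 2))"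
    by (rule card_wball_ge[OF finite_bseq rep_bseq])
  also have "\<dots> \<le> KK n M" unfolding KK_def
    by (rule card_Bij_ge[OF finite_wball[OF finite_bseq] Nil_wball])
  finally show ?thesis by simp
qed

lemma card_Ival: "card (Ival mm n) = KK n (mm n)"
  by (simp add: Ival_def)

lemma finite_HG: "finite (carrier (HG n M))"
  unfolding HG_def carrier_BijGroup by (rule finite_Bij[OF finite_wball[OF finite_bseq]])

lemma fb_bij: "bij_betw (fb n) (carrier (HG n (mm n))) (Ival mm n)"
proof -
  have "\<exists>f. bij_betw f (carrier (HG n (mm n))) (Ival mm n)"
    by (rule finite_same_card_bij[OF finite_HG])
       (auto simp: Ival_def card_Ival KK_def HG_def carrier_BijGroup)
  then show ?thesis unfolding fb_def by (rule someI_ex)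
qed

lemma sum_Ival: "(\<Sum>k<n. int (card (Ival mm k))) = int (mm n)"
  by (induct n) (simp_all add: card_Ival)

theorem proposition1p2:
  shows "\<exists>(m :: nat \<Rightarrow> nat) (G :: nat \<Rightarrow> nat monoid)
            (c :: nat \<Rightarrow> bool list fword \<Rightarrow> nat) (\<sigma> :: nat \<Rightarrow> nat \<Rightarrow> nat \<Rightarrow> nat).
     strict_mono m \<and> m 0 = 0 \<and>
     (\<forall>n. group (G n) \<and> finite (carrier (G n))
        \<and> c n \<in> hom (free_group (bseq n)) (G n)
        \<and> faithful_action (G n) (Ival m n) (\<sigma> n)
        \<and> transitive_action (G n) (Ival m n) (\<sigma> n)
        \<and> (\<Sum>k<n. int (card (Ival m k))) < int (card (Ival m n)) - 1
        \<and> inj_on (c n) (W n))"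
proof -
  define G where "G n = transp (HG n (mm n)) (fb n) (Ival mm n)" for n
  define c where "c n = fb n \<circ> evalw (HG n (mm n)) (ev (bseq n) (n + mm n + 2))" for n
  define \<sigma> where "\<sigma> n = (\<lambda>g. \<lambda>x\<in>carrier (G n). g \<otimes>\<^bsub>G n\<^esub> x)" for n
  have carG: "carrier (G n) = Ival mm n" for n by (simp add: G_def transp_def)
  have grpH: "group (HG n M)" for n M by (simp add: HG_def group_BijGroup)
  have grpG: "group (G n)" and fbhom: "fb n \<in> hom (HG n (mm n)) (G n)" for n
    using transp[OF grpH fb_bij] by (simp_all add: G_def)
  have "strict_mono mm"
    unfolding strict_mono_Suc_iff
  proof
    fix n show "mm n < mm (Suc n)" using KK_ge[of "mm n" n] by simp
  qed
  moreover have "\<forall>n. group (G n) \<and> finite (carrier (G n))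
        \<and> c n \<in> hom (free_group (bseq n)) (G n)
        \<and> faithful_action (G n) (Ival mm n) (\<sigma> n)
        \<and> transitive_action (G n) (Ival mm n) (\<sigma> n)
        \<and> (\<Sum>k<n. int (card (Ival mm k))) < int (card (Ival mm n)) - 1
        \<and> inj_on (c n) (W n)"
  proof (intro allI conjI)
    fix n
    let ?S = "wball (bseq n) (n + mm n + 2)"
    let ?ev = "evalw (HG n (mm n)) (ev (bseq n) (n + mm n + 2))"
    show "group (G n)" by (rule grpG)
    show "finite (carrier (G n))" by (simp add: carG Ival_def)
    have evh: "?ev \<in> hom (free_group (bseq n)) (HG n (mm n))"
      unfolding HG_def by (rule evalw_ev_hom)
    show "c n \<in> hom (free_group (bseq n)) (G n)"
      unfolding c_def by (rule hom_compose[OF evh fbhom])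
    show "faithful_action (G n) (Ival mm n) (\<sigma> n)"
      using regular_action(1)[OF grpG] by (simp add: \<sigma>_def carG)
    show "transitive_action (G n) (Ival mm n) (\<sigma> n)"
      using regular_action(2)[OF grpG] by (simp add: \<sigma>_def carG)
    show "(\<Sum>k<n. int (card (Ival mm k))) < int (card (Ival mm n)) - 1"
      using KK_ge[of "mm n" n] unfolding sum_Ival unfolding card_Ival by simp
    show "inj_on (c n) (W n)"
    proof (rule inj_onI)
      fix u v assume u: "u \<in> W n" and v: "v \<in> W n" and eq: "c n u = c n v"
      have uu: "reduced u" "snd ` set u \<subseteq> bseq n" "length u \<le> n + mm n + 2"
        using u by (auto simp: W_def free_group_def)
      have vv: "reduced v" "snd ` set v \<subseteq> bseq n" "length v \<le> n + mm n + 2"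
        using v by (auto simp: W_def free_group_def)
      have cu: "?ev u \<in> carrier (HG n (mm n))"
        unfolding HG_def carrier_BijGroup by (rule evalw_ev_carrier[OF uu(2)])
      have cv: "?ev v \<in> carrier (HG n (mm n))"
        unfolding HG_def carrier_BijGroup by (rule evalw_ev_carrier[OF vv(2)])
      have "fb n (?ev u) = fb n (?ev v)" using eq by (simp add: c_def)
      then have "?ev u = ?ev v" using fb_bij[of n] cu cv by (auto simp: bij_betw_def inj_on_def)
      then have "?ev u [] = ?ev v []" by simp
      then show "u = v"
        unfolding HG_def evalw_ev_apply[OF uu] evalw_ev_apply[OF vv] .
    qed
  qed
  ultimately show ?thesis
    apply -
    apply (rule exI[where x=mm], rule exI[where x=G], rule exI[where x=c], rule exI[where x=\<sigma>])
    apply (intro conjI)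
      apply assumption
     apply simp
    apply assumption
    done
qed


end
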